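(* Let $\varphi=\frac{1+\sqrt5}{2}$ and for every integer $m$ let $F_m=\frac{\varphi^m-(-1/\varphi)^m}{\varphi+1/\varphi}$; let $F_0!=1$, $F_n!=F_1\cdots F_n$. For a real constant $a$ define the Golden polynomials $P_0(x)=1$ and, for $n\ge1$, $$P_n(x)=\frac{(x-a)_F^n}{F_n!},\qquad (x-a)_F^n=\prod_{k=0}^{n-1}\big(x-(-1)^k\varphi^{\,n-1-2k}a\big).$$ Then $D_FP_n=P_{n-1}$ for $n\ge1$ (where $D_F$ is the linear operator on polynomials in $x$ with $D_Fx^m=F_mx^{m-1}$, $D_F1=0$), and for every $n\ge1$, respectively $n\ge0$, $$P_{2n}(x)=\frac1{F_{2n}!}\prod_{k=1}^n\Big(x^2-(-1)^{n+k}(F_{2k-1}+2F_{2k-2})xa-a^2\Big),$$ $$P_{2n+1}(x)=\frac{x-(-1)^na}{F_{2n+1}!}\prod_{k=1}^n\Big(x^2-(-1)^{n+k}(F_{2k}+2F_{2k-1})xa+a^2\Big).$$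
   Context: Empty products equal $1$. *)

theory Defs
  imports Complex_Main "HOL-Computational_Algebra.Polynomial"
begin

definition golden :: real where "golden = (1 + sqrt 5) / 2"

definition GF :: "int \<Rightarrow> real" where
  "GF m = (golden powi m - (- 1 / golden) powi m) / (golden + 1 / golden)"

definition GFfact :: "nat \<Rightarrow> real" where
  "GFfact n = (\<Prod>k = 1..n. GF (int k))"

text \<open>The golden derivative: linear operator with D_F x^m = F_m x^(m-1), D_F 1 = 0,
  i.e. coefficient m of D_F p is F_(m+1) times coefficient (m+1) of p.\<close>
definition golden_deriv :: "real poly \<Rightarrow> real poly" where
  "golden_deriv p = Abs_poly (\<lambda>m. GF (int (Suc m)) * coeff p (Suc m))"

definition golden_binom :: "real \<Rightarrow> nat \<Rightarrow> real poly" where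
  "golden_binom a n = (\<Prod>k<n. [: - ((-1) ^ k * golden powi (int n - 1 - 2 * int k) * a), 1 :])"

definition golden_poly :: "real \<Rightarrow> nat \<Rightarrow> real poly" where
  "golden_poly a n = (if n = 0 then 1 else smult (1 / GFfact n) (golden_binom a n))"

end

theory Submission
  imports Defs
begin


lemma sq5: "sqrt 5 > (1::real)" by simp
lemma phi_pos: "golden > 0"
proof -
  have "0 < 1 + sqrt 5" using sq5 by linarith
  thus ?thesis unfolding golden_def by simp
qed
lemma phi_ne: "golden \<noteq> 0" using phi_pos by simp
lemma phi_gt1: "golden > 1" unfolding golden_def using sq5 by simp

lemma psi_eq: "-1/golden = (1 - sqrt 5)/2"
proof -
  have h: "(1 + sqrt 5) * (1 - sqrt 5) = -4" by (simp add: algebra_simps)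
  have "1 + sqrt 5 \<noteq> 0" using sq5 by linarith
  hence "-1 / ((1 + sqrt 5)/2) = (1 - sqrt 5)/2" using h by (simp add: field_simps)
  thus ?thesis unfolding golden_def .
qed

lemma psi_abs: "\<bar>-1/golden\<bar> < 1" using phi_gt1 by simp

lemma GF_nat: "GF (int k) = (golden ^ k - (-1/golden) ^ k) / (golden + 1/golden)"
  unfolding GF_def by simp

lemma GF_pos: "k \<ge> 1 \<Longrightarrow> GF (int k) > 0"
proof -
  assume k: "k \<ge> 1"
  have "golden ^ k > 1" using phi_gt1 k by (simp add: one_less_power)
  moreover have "(-1/golden) ^ k \<le> 1"
  proof -
    have "(-1/golden) ^ k \<le> \<bar>(-1/golden) ^ k\<bar>" by (rule abs_ge_self)
    also have "\<dots> = \<bar>-1/golden\<bar> ^ k" by (rule power_abs)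
    also have "\<dots> \<le> 1" using psi_abs by (intro power_le_one) auto
    finally show ?thesis .
  qed
  ultimately have "golden ^ k - (-1/golden) ^ k > 0" by linarith
  moreover have "golden + 1/golden > 0" using phi_pos by (intro add_pos_pos; simp)
  ultimately show ?thesis unfolding GF_nat by (rule divide_pos_pos)
qed

lemma GFfact_Suc: "GFfact (Suc n) = GFfact n * GF (int (Suc n))"
  unfolding GFfact_def by (simp add: prod.cl_ivl_Suc)

lemma GFfact_ne: "GFfact n \<noteq> 0"
proof -
  have "\<forall>a\<in>{1..n}. GF (int a) \<noteq> 0" using GF_pos by force
  thus ?thesis unfolding GFfact_def by (simp add: prod_zero_iff)
qed

lemma lucas: "GF m + 2 * GF (m - 1) = golden powi m + (-1/golden) powi m"
proof -
  define X where "X = golden powi (m-1)"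
  define Y where "Y = (-1/golden) powi (m-1)"
  have p1: "golden powi m = X * golden" unfolding X_def
    by (rule power_int_minus_mult[symmetric]) (use phi_ne in simp)
  have p2: "(-1/golden) powi m = Y * (-1/golden)" unfolding Y_def
    by (rule power_int_minus_mult[symmetric]) (use phi_ne in simp)
  have s: "golden + 1/golden = sqrt 5"
    using psi_eq unfolding golden_def by (simp add: field_simps)
  have s5: "sqrt 5 * sqrt 5 = 5" by simp
  have sn: "sqrt 5 \<noteq> 0" by simp
  have h1: "golden + 2 - sqrt 5 * golden = 0" unfolding golden_def
    by (simp add: algebra_simps s5)
  have h2: "(-1/golden) + 2 + sqrt 5 * (-1/golden) = 0" unfolding psi_eq
    by (simp add: field_simps s5)
  have e1: "X*golden + 2*X - sqrt 5*(X*golden) = 0"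
  proof -
    have "X*(golden + 2 - sqrt 5 * golden) = 0" using h1 by simp
    thus ?thesis by (simp add: algebra_simps)
  qed
  have e2: "Y*(-1/golden) + 2*Y + sqrt 5*(Y*(-1/golden)) = 0"
  proof -
    have "Y*((-1/golden) + 2 + sqrt 5 * (-1/golden)) = 0" using h2 by simp
    thus ?thesis by (simp only: algebra_simps)
  qed
  have key: "X*golden - Y*(-1/golden) + 2*(X - Y) = sqrt 5 * (X*golden + Y*(-1/golden))"
    using e1 e2 by (simp add: algebra_simps)
  have g1: "GF m = (X*golden - Y*(-1/golden)) / sqrt 5" unfolding GF_def p1 p2 s ..
  have g2: "GF (m-1) = (X - Y) / sqrt 5" unfolding GF_def s X_def Y_def ..
  have "GF m + 2 * GF (m - 1) = (X*golden - Y*(-1/golden) + 2*(X - Y)) / sqrt 5"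
    unfolding g1 g2 by (simp add: add_divide_distrib)
  also have "\<dots> = X*golden + Y*(-1/golden)" unfolding key using sn by simp
  finally show ?thesis unfolding p1 p2 .
qed



lemma coeff_gd: "coeff (golden_deriv p) m = GF (int (Suc m)) * coeff p (Suc m)"
proof -
  have "coeff (Abs_poly (\<lambda>m. GF (int (Suc m)) * coeff p (Suc m))) = (\<lambda>m. GF (int (Suc m)) * coeff p (Suc m))"
    by (rule coeff_Abs_poly[where n = "degree p"]) (simp add: coeff_eq_0)
  thus ?thesis unfolding golden_deriv_def by simp
qed

lemma gd_smult: "golden_deriv (smult c p) = smult c (golden_deriv p)"
  by (rule poly_eqI) (simp add: coeff_gd)

lemma coeff_comp: "coeff ((p::real poly) \<circ>\<^sub>p [:0,c:]) m = c^m * coeff p m"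
proof (induction p arbitrary: m rule: pCons_induct)
  case 0 thus ?case by simp
next
  case (pCons b p)
  show ?case
  proof (cases m)
    case 0 thus ?thesis by (simp add: pcompose_pCons)
  next
    case (Suc m') thus ?thesis using pCons.IH by (simp add: pcompose_pCons)
  qed
qed

lemma ident:
  fixes x a :: real and N :: nat
  defines "\<beta> \<equiv> \<lambda>k::nat. (-1)^k * golden powi (int (Suc N) - 1 - 2*int k) * a"
  defines "\<gamma> \<equiv> \<lambda>k::nat. (-1)^k * golden powi (int N - 1 - 2*int k) * a"
  shows "(\<Prod>k<Suc N. golden*x - \<beta> k) - (\<Prod>k<Suc N. (-1/golden)*x - \<beta> k)
     = (golden^Suc N - (-1/golden)^Suc N) * x * (\<Prod>k<N. x - \<gamma> k)"
proof -
  let ?G = "\<Prod>k<N. x - \<gamma> k"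
  let ?p = "-1/golden"
  have f1: "golden*x - \<beta> k = golden * (x - \<gamma> k)" for k
  proof -
    have e: "int (Suc N) - 1 - 2*int k = (int N - 1 - 2*int k) + 1" by simp
    have "golden powi (int (Suc N) - 1 - 2*int k) = golden * golden powi (int N - 1 - 2*int k)"
      unfolding e using phi_ne by (rule power_int_add_1'[OF disjI1])
    thus ?thesis unfolding \<beta>_def \<gamma>_def by (simp add: algebra_simps)
  qed
  have f2: "?p*x - \<beta> (Suc k) = ?p * (x - \<gamma> k)" for k
  proof -
    have e: "int (Suc N) - 1 - 2*int (Suc k) = (int N - 1 - 2*int k) - 1" by simp
    have "golden powi ((int N - 1 - 2*int k) - 1) * golden = golden powi (int N - 1 - 2*int k)"
      using phi_ne by (intro power_int_minus_mult) simp
    hence "golden powi (int (Suc N) - 1 - 2*int (Suc k)) = golden powi (int N - 1 - 2*int k) / golden"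
      unfolding e using phi_ne by (simp add: field_simps)
    thus ?thesis unfolding \<beta>_def \<gamma>_def using phi_ne by (simp add: field_simps)
  qed
  have bN: "golden^N * \<beta> N = (-1)^N * a"
  proof -
    have "golden powi (int (Suc N) - 1 - 2*int N) = inverse (golden ^ N)"
      by (simp add: power_int_minus[of golden "int N", simplified])
    thus ?thesis unfolding \<beta>_def using phi_ne by (simp add: field_simps)
  qed
  have b0: "?p^N * \<beta> 0 = (-1)^N * a"
  proof -
    have "?p^N * golden^N = (-1)^N" by (simp add: power_mult_distrib[symmetric] phi_ne)
    thus ?thesis unfolding \<beta>_def by (simp add: algebra_simps)
  qed
  have P1: "(\<Prod>k<Suc N. golden*x - \<beta> k) = golden^N * ?G * (golden*x - \<beta> N)"
    by (simp add: f1 prod.distrib)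
  have P2: "(\<Prod>k<Suc N. ?p*x - \<beta> k) = (?p*x - \<beta> 0) * (?p^N * ?G)"
  proof -
    have "(\<Prod>k<Suc N. ?p*x - \<beta> k) = (?p*x - \<beta> 0) * (\<Prod>k<N. ?p*x - \<beta> (Suc k))"
      by (rule prod.lessThan_Suc_shift)
    also have "(\<Prod>k<N. ?p*x - \<beta> (Suc k)) = (\<Prod>k<N. ?p * (x - \<gamma> k))" by (simp only: f2)
    also have "\<dots> = ?p^N * ?G" by (simp only: prod.distrib prod_constant card_lessThan)
    finally show ?thesis .
  qed
  show ?thesis unfolding P1 P2
  proof -
    have "golden ^ N * ?G * (golden * x - \<beta> N) - (?p * x - \<beta> 0) * (?p ^ N * ?G)
      = ?G * (golden^Suc N * x - golden^N * \<beta> N - ?p^Suc N * x + ?p^N * \<beta> 0)"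
      by (simp add: algebra_simps)
    also have "\<dots> = (golden ^ Suc N - ?p ^ Suc N) * x * ?G" unfolding bN b0 by (simp add: algebra_simps)
    finally show "golden ^ N * ?G * (golden * x - \<beta> N) - (?p * x - \<beta> 0) * (?p ^ N * ?G)
      = (golden ^ Suc N - ?p ^ Suc N) * x * ?G" .
  qed
qed



lemma binom_eval: "poly (golden_binom a n) y = (\<Prod>k<n. y - (-1)^k * golden powi (int n - 1 - 2*int k) * a)"
  unfolding golden_binom_def poly_prod by simp

lemma gd_binom: "golden_deriv (golden_binom a (Suc N)) = smult (GF (int (Suc N))) (golden_binom a N)"
proof -
  define f where "f = golden_binom a (Suc N)"
  define G where "G = golden_binom a N"
  define p where "p = -1/golden"
  have E: "f \<circ>\<^sub>p [:0,golden:] - f \<circ>\<^sub>p [:0,p:] = smult (golden^Suc N - p^Suc N) (pCons 0 G)"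
  proof (rule iffD1[OF poly_eq_poly_eq_iff], rule ext)
    fix x
    have "poly (f \<circ>\<^sub>p [:0,golden:] - f \<circ>\<^sub>p [:0,p:]) x = poly f (golden*x) - poly f (p*x)"
      by (simp add: poly_pcompose mult.commute)
    also have "\<dots> = (golden^Suc N - p^Suc N) * x * poly G x"
      unfolding f_def G_def binom_eval p_def by (rule ident)
    finally show "poly (f \<circ>\<^sub>p [:0,golden:] - f \<circ>\<^sub>p [:0,p:]) x = poly (smult (golden^Suc N - p^Suc N) (pCons 0 G)) x"
      by simp
  qed
  show ?thesis unfolding f_def[symmetric] G_def[symmetric]
  proof (rule poly_eqI)
    fix m
    have c: "(golden^Suc m - p^Suc m) * coeff f (Suc m) = (golden^Suc N - p^Suc N) * coeff G m"
      using arg_cong[OF E, of "\<lambda>q. coeff q (Suc m)"] by (simp add: coeff_comp algebra_simps)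
    have "coeff (golden_deriv f) m = (golden^Suc m - p^Suc m) * coeff f (Suc m) / (golden + 1/golden)"
      unfolding coeff_gd GF_nat p_def by simp
    also have "\<dots> = (golden^Suc N - p^Suc N) * coeff G m / (golden + 1/golden)" unfolding c ..
    also have "\<dots> = coeff (smult (GF (int (Suc N))) G) m" unfolding GF_nat p_def by simp
    finally show "coeff (golden_deriv f) m = coeff (smult (GF (int (Suc N))) G) m" .
  qed
qed

lemma gp_alt: "golden_poly a n = smult (1 / GFfact n) (golden_binom a n)"
  by (cases "n = 0") (simp_all add: golden_poly_def golden_binom_def GFfact_def)

lemma part1: "n \<ge> 1 \<Longrightarrow> golden_deriv (golden_poly a n) = golden_poly a (n - 1)"
proof -
  assume "n \<ge> 1"
  then obtain N where n: "n = Suc N" by (cases n) auto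
  have "GF (int (Suc N)) \<noteq> 0" using GF_pos[of "Suc N"] by simp
  thus ?thesis unfolding n gp_alt gd_smult gd_binom using GFfact_ne[of N]
    by (simp add: GFfact_Suc field_simps)
qed



lemma pair_even: "(\<Prod>k<2*N. g k) = (\<Prod>k<N. g k * g (2*N - 1 - k))"
  for g :: "nat \<Rightarrow> 'a::comm_monoid_mult"
proof (induction N arbitrary: g)
  case 0 show ?case by simp
next
  case (Suc N)
  have "(\<Prod>k<2*Suc N. g k) = (\<Prod>k<Suc (Suc (2*N)). g k)" by simp
  also have "\<dots> = (g 0 * (\<Prod>k<2*N. g (Suc k))) * g (Suc (2*N))"
    by (simp only: prod.lessThan_Suc[of g "Suc (2*N)"] prod.lessThan_Suc_shift[of g "2*N"])
  also have "(\<Prod>k<2*N. g (Suc k)) = (\<Prod>k<N. g (Suc k) * g (Suc (2*N - 1 - k)))"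
    using Suc.IH[of "\<lambda>k. g (Suc k)"] by simp
  also have "\<dots> = (\<Prod>k<N. g (Suc k) * g (2*Suc N - 1 - Suc k))"
    by (rule prod.cong) (auto simp: Suc_diff_Suc)
  also have "g 0 * (\<Prod>k<N. g (Suc k) * g (2*Suc N - 1 - Suc k)) * g (Suc (2*N))
     = (g 0 * g (2*Suc N - 1 - 0)) * (\<Prod>k<N. g (Suc k) * g (2*Suc N - 1 - Suc k))"
    by (simp add: ac_simps)
  also have "\<dots> = (\<Prod>k<Suc N. g k * g (2*Suc N - 1 - k))"
    by (rule prod.lessThan_Suc_shift[symmetric])
  finally show ?case .
qed

lemma pair_odd: "(\<Prod>k<2*N+1. g k) = g N * (\<Prod>k<N. g k * g (2*N - k))"
  for g :: "nat \<Rightarrow> 'a::comm_monoid_mult"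
proof (induction N arbitrary: g)
  case 0 show ?case by simp
next
  case (Suc N)
  have "(\<Prod>k<2*Suc N+1. g k) = (\<Prod>k<Suc (Suc (2*N+1)). g k)" by simp
  also have "\<dots> = (g 0 * (\<Prod>k<2*N+1. g (Suc k))) * g (Suc (2*N+1))"
    by (simp only: prod.lessThan_Suc[of g "Suc (2*N+1)"] prod.lessThan_Suc_shift[of g "2*N+1"])
  also have "(\<Prod>k<2*N+1. g (Suc k)) = g (Suc N) * (\<Prod>k<N. g (Suc k) * g (Suc (2*N - k)))"
    using Suc.IH[of "\<lambda>k. g (Suc k)"] by simp
  also have "(\<Prod>k<N. g (Suc k) * g (Suc (2*N - k))) = (\<Prod>k<N. g (Suc k) * g (2*Suc N - Suc k))"
  proof (rule prod.cong)
    fix k assume "k \<in> {..<N}"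
    hence "Suc (2*N - k) = 2*Suc N - Suc k" by simp
    thus "g (Suc k) * g (Suc (2*N - k)) = g (Suc k) * g (2*Suc N - Suc k)" by simp
  qed simp
  also have "g 0 * (g (Suc N) * (\<Prod>k<N. g (Suc k) * g (2*Suc N - Suc k))) * g (Suc (2*N+1))
     = g (Suc N) * ((g 0 * g (2*Suc N - 0)) * (\<Prod>k<N. g (Suc k) * g (2*Suc N - Suc k)))"
    by (simp add: ac_simps)
  also have "(g 0 * g (2*Suc N - 0)) * (\<Prod>k<N. g (Suc k) * g (2*Suc N - Suc k)) = (\<Prod>k<Suc N. g k * g (2*Suc N - k))"
    by (rule prod.lessThan_Suc_shift[symmetric])
  finally show ?case .
qed

lemma rev_idx: "(\<Prod>k<N. Q (N - k)) = (\<Prod>j = 1..N. Q j)"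
  for Q :: "nat \<Rightarrow> 'a::comm_monoid_mult"
  by (rule prod.reindex_bij_witness[where i="\<lambda>b. N - b" and j="\<lambda>k. N - k"]) auto

lemma psi_powi: "(-1/golden) powi m = (if even m then (golden powi (-m)) else - (golden powi (-m)))"
proof -
  have "-1/golden = - inverse golden" by (simp add: divide_inverse)
  thus ?thesis by (simp add: power_int_minus_left power_int_inverse power_int_minus)
qed

lemma luc_odd: "odd m \<Longrightarrow> GF m + 2 * GF (m - 1) = golden powi m - golden powi (-m)"
  unfolding lucas psi_powi by simp

lemma luc_even: "even m \<Longrightarrow> GF m + 2 * GF (m - 1) = golden powi m + golden powi (-m)"
  unfolding lucas psi_powi by simp

lemma lin_mult: "[:c, 1:] * [:d, 1:] = [:c*d, c + d, 1:]" for c d :: real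
  by (simp add: algebra_simps)

lemma pinv: "golden powi e * golden powi (-e) = 1"
  using phi_ne by (simp add: power_int_minus)



lemma even_factor:
  assumes k: "k < N"
  shows "[: - ((-1) ^ k * golden powi (int (2*N) - 1 - 2 * int k) * a), 1 :] *
         [: - ((-1) ^ (2*N-1-k) * golden powi (int (2*N) - 1 - 2 * int (2*N-1-k)) * a), 1 :]
       = [: - (a ^ 2), - ((-1) ^ (N + (N-k)) * (GF (2 * int (N-k) - 1) + 2 * GF (2 * int (N-k) - 2)) * a), 1 :]"
proof -
  define e where "e = int (2*N) - 1 - 2 * int k"
  have h1: "int (2*N) - 1 - 2 * int (2*N-1-k) = -e" unfolding e_def using k by (simp add: of_nat_diff)
  have "even (2*N-1-k) \<longleftrightarrow> odd k" using k by presburger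
  hence h2: "(-1::real)^(2*N-1-k) = -((-1)^k)" by (simp add: minus_one_power_iff)
  have "even (N + (N-k)) \<longleftrightarrow> even k" using k by presburger
  hence h3: "(-1::real)^(N + (N-k)) = (-1)^k" by (simp add: minus_one_power_iff)
  have i1: "2 * int (N-k) - 1 = e" and i2: "2 * int (N-k) - 2 = e - 1"
    unfolding e_def using k by (simp_all add: of_nat_diff)
  have oe: "odd e" unfolding e_def by presburger
  have h4: "GF (2 * int (N-k) - 1) + 2 * GF (2 * int (N-k) - 2) = golden powi e - golden powi (-e)"
    unfolding i1 i2 using oe by (rule luc_odd)
  define s :: real where "s = (-1)^k"
  have ss: "s * s = 1" unfolding s_def by simp
  have pe: "golden powi e * golden powi (-e) = 1" by (rule pinv)
  have "(-(s * golden powi e * a)) * (-(-s * golden powi (-e) * a)) = -((s*s) * (golden powi e * golden powi (-e)) * a^2)"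
    by (simp add: algebra_simps power2_eq_square)
  also have "\<dots> = - (a^2)" unfolding ss pe by simp
  finally have cd: "(-(s * golden powi e * a)) * (-(-s * golden powi (-e) * a)) = - (a^2)" .
  have cpd: "(-(s * golden powi e * a)) + (-(-s * golden powi (-e) * a)) = - (s * (golden powi e - golden powi (-e)) * a)"
    by (simp add: algebra_simps)
  show ?thesis unfolding h1 h2 h3 h4 e_def[symmetric] s_def[symmetric] lin_mult cd cpd ..
qed

lemma odd_factor:
  assumes k: "k < N"
  shows "[: - ((-1) ^ k * golden powi (int (2*N+1) - 1 - 2 * int k) * a), 1 :] *
         [: - ((-1) ^ (2*N-k) * golden powi (int (2*N+1) - 1 - 2 * int (2*N-k)) * a), 1 :]
       = [: a ^ 2, - ((-1) ^ (N + (N-k)) * (GF (2 * int (N-k)) + 2 * GF (2 * int (N-k) - 1)) * a), 1 :]"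
proof -
  define e where "e = int (2*N+1) - 1 - 2 * int k"
  have h1: "int (2*N+1) - 1 - 2 * int (2*N-k) = -e" unfolding e_def using k by (simp add: of_nat_diff)
  have "even (2*N-k) \<longleftrightarrow> even k" using k by presburger
  hence h2: "(-1::real)^(2*N-k) = (-1)^k" by (simp add: minus_one_power_iff)
  have "even (N + (N-k)) \<longleftrightarrow> even k" using k by presburger
  hence h3: "(-1::real)^(N + (N-k)) = (-1)^k" by (simp add: minus_one_power_iff)
  have i1: "2 * int (N-k) = e" and i2: "2 * int (N-k) - 1 = e - 1"
    unfolding e_def using k by (simp_all add: of_nat_diff)
  have oe: "even e" unfolding e_def by presburger
  have h4: "GF (2 * int (N-k)) + 2 * GF (2 * int (N-k) - 1) = golden powi e + golden powi (-e)"
    unfolding i1 i2 using oe by (rule luc_even)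
  define s :: real where "s = (-1)^k"
  have ss: "s * s = 1" unfolding s_def by simp
  have pe: "golden powi e * golden powi (-e) = 1" by (rule pinv)
  have "(-(s * golden powi e * a)) * (-(s * golden powi (-e) * a)) = ((s*s) * (golden powi e * golden powi (-e)) * a^2)"
    by (simp add: algebra_simps power2_eq_square)
  also have "\<dots> = a^2" unfolding ss pe by simp
  finally have cd: "(-(s * golden powi e * a)) * (-(s * golden powi (-e) * a)) = a^2" .
  have cpd: "(-(s * golden powi e * a)) + (-(s * golden powi (-e) * a)) = - (s * (golden powi e + golden powi (-e)) * a)"
    by (simp add: algebra_simps)
  show ?thesis unfolding h1 h2 h3 h4 e_def[symmetric] s_def[symmetric] lin_mult cd cpd ..
qed

lemma binom_even: "golden_binom a (2*N) =
   (\<Prod>k = 1..N. [: - (a ^ 2),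
                 - ((-1) ^ (N + k) * (GF (2 * int k - 1) + 2 * GF (2 * int k - 2)) * a), 1 :])"
  unfolding golden_binom_def pair_even
  apply (subst rev_idx[symmetric])
  apply (rule prod.cong[OF refl])
  apply (rule even_factor)
  apply simp
  done

lemma binom_odd: "golden_binom a (2*N+1) = [: - ((-1) ^ N * a), 1 :] *
   (\<Prod>k = 1..N. [: a ^ 2,
                 - ((-1) ^ (N + k) * (GF (2 * int k) + 2 * GF (2 * int k - 1)) * a), 1 :])"
  unfolding golden_binom_def pair_odd
  apply (subst rev_idx[symmetric])
  apply (rule arg_cong2[where f="(*)"])
   apply simp
  apply (rule prod.cong[OF refl])
  apply (rule odd_factor)
  apply simp
  done


theorem mainTheorem12:
  fixes a :: real
  shows "(\<forall>n\<ge>1. golden_deriv (golden_poly a n) = golden_poly a (n - 1))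
    \<and> (\<forall>n\<ge>1. golden_poly a (2 * n) =
          smult (1 / GFfact (2 * n))
            (\<Prod>k = 1..n. [: - (a ^ 2),
                 - ((-1) ^ (n + k) * (GF (2 * int k - 1) + 2 * GF (2 * int k - 2)) * a), 1 :]))
    \<and> (\<forall>n. golden_poly a (2 * n + 1) =
          smult (1 / GFfact (2 * n + 1))
            ([: - ((-1) ^ n * a), 1 :] *
             (\<Prod>k = 1..n. [: a ^ 2,
                 - ((-1) ^ (n + k) * (GF (2 * int k) + 2 * GF (2 * int k - 1)) * a), 1 :])))"
  proof (intro conjI allI impI)
  fix n :: nat assume "n \<ge> 1"
  thus "golden_deriv (golden_poly a n) = golden_poly a (n - 1)" by (rule part1)
next
  fix n :: nat assume "n \<ge> 1"
  show "golden_poly a (2 * n) = smult (1 / GFfact (2 * n))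
            (\<Prod>k = 1..n. [: - (a ^ 2),
                 - ((-1) ^ (n + k) * (GF (2 * int k - 1) + 2 * GF (2 * int k - 2)) * a), 1 :])"
    unfolding gp_alt binom_even ..
next
  fix n :: nat
  show "golden_poly a (2 * n + 1) =
          smult (1 / GFfact (2 * n + 1))
            ([: - ((-1) ^ n * a), 1 :] *
             (\<Prod>k = 1..n. [: a ^ 2,
                 - ((-1) ^ (n + k) * (GF (2 * int k) + 2 * GF (2 * int k - 1)) * a), 1 :]))"
    unfolding gp_alt binom_odd ..
qed

end
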